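(* Let $C$ be a strict globularily generated double category. Then the transversal category $\tau C$ of $C$ is the colimit (in $\mathbf{Cat}$) of the increasing chain of horizontal categories $H^C_1\subseteq H^C_2\subseteq\cdots$; i.e. $\tau C=\bigcup_n H^C_n$.
   Context: For a strict double category $C$: $C_0$ is the category of objects and vertical morphisms, $C_1$ the category of horizontal morphisms and 2-morphisms (composition = vertical composition), $i$ the horizontal identity, $\ast$ the strictly associative and unital horizontal composition. A 2-morphism is globular if its source and target are identity vertical morphisms. $C$ is globularily generated if the smallest sub-double category of $C$ containing all objects, vertical and horizontal morphisms and all globular 2-morphisms is $C$ itself. The transversal category $\tau C$ has as objects the vertical morphisms of $C$ and as morphisms the 2-morphisms of $C$ (a 2-morphism $\Phi$ goes from $s\Phi$ to $t\Phi$), with composition given by horizontal composition. Let $H^C_1$ consist of the globular 2-morphisms and horizontal identities $i_\alpha$ of vertical morphisms $\alpha$; $V^C_1$ is the subcategory of $C_1$ generated by $H^C_1$ (under vertical composition). For $n>1$, $H^C_n$ is the collection of all horizontal composites of finite composable sequences of morphisms of $V^C_{n-1}$, and $V^C_n$ is the subcategory of $C_1$ generated by $H^C_n$. For strict $C$, each $H^C_n$ is the set of morphisms of a subcategory of $\tau C$ containing all objects (the $n$-th horizontal category), and $H^C_n\subseteq H^C_{n+1}$. *)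

theory Defs
  imports Main
begin

text \<open>
A strict double category, presented as an internal category in Cat by its data.
Conventions: all compositions are written in diagrammatic order.
\<^item> C_0: objects Obj, vertical morphisms Ver with vdom, vcod, vid, vcomp
  (vcomp a b defined when vcod a = vdom b).
\<^item> C_1: objects = horizontal morphisms Hor, morphisms = 2-morphisms Sq with
  cdom, ccod (horizontal boundaries), identities cid, composition cvcomp
  (= vertical composition of 2-morphisms, defined when ccod P = cdom Q).
\<^item> source/target functors s,t : C_1 -> C_0: hdom/hcod on Hor, src/tgt on Sq.
\<^item> horizontal identity i : C_0 -> C_1: hid on objects, chid on vertical morphisms.
\<^item> horizontal composition *: hcomp on Hor (defined when hcod f = hdom g),
  chcomp on Sq (defined when tgt P = src Q).
\<close>

record ('o, 'v, 'h, 'c) dbl =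
  Obj :: "'o set"
  Ver :: "'v set"
  vdom :: "'v \<Rightarrow> 'o"
  vcod :: "'v \<Rightarrow> 'o"
  vid :: "'o \<Rightarrow> 'v"
  vcomp :: "'v \<Rightarrow> 'v \<Rightarrow> 'v"
  Hor :: "'h set"
  hdom :: "'h \<Rightarrow> 'o"
  hcod :: "'h \<Rightarrow> 'o"
  hid :: "'o \<Rightarrow> 'h"
  hcomp :: "'h \<Rightarrow> 'h \<Rightarrow> 'h"
  Sq :: "'c set"
  cdom :: "'c \<Rightarrow> 'h"
  ccod :: "'c \<Rightarrow> 'h"
  src :: "'c \<Rightarrow> 'v"
  tgt :: "'c \<Rightarrow> 'v"
  cid :: "'h \<Rightarrow> 'c"
  cvcomp :: "'c \<Rightarrow> 'c \<Rightarrow> 'c"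
  chid :: "'v \<Rightarrow> 'c"
  chcomp :: "'c \<Rightarrow> 'c \<Rightarrow> 'c"

definition strict_double_category :: "('o, 'v, 'h, 'c, 'z) dbl_scheme \<Rightarrow> bool" where
  "strict_double_category C \<longleftrightarrow>
   \<comment> \<open>C_0 is a category\<close>
   (\<forall>a\<in>Ver C. vdom C a \<in> Obj C \<and> vcod C a \<in> Obj C) \<and>
   (\<forall>x\<in>Obj C. vid C x \<in> Ver C \<and> vdom C (vid C x) = x \<and> vcod C (vid C x) = x) \<and>
   (\<forall>a\<in>Ver C. \<forall>b\<in>Ver C. vcod C a = vdom C b \<longrightarrow>
      vcomp C a b \<in> Ver C \<and> vdom C (vcomp C a b) = vdom C a \<and> vcod C (vcomp C a b) = vcod C b) \<and>
   (\<forall>a\<in>Ver C. \<forall>b\<in>Ver C. \<forall>c\<in>Ver C. vcod C a = vdom C b \<longrightarrow> vcod C b = vdom C c \<longrightarrow>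
      vcomp C (vcomp C a b) c = vcomp C a (vcomp C b c)) \<and>
   (\<forall>a\<in>Ver C. vcomp C (vid C (vdom C a)) a = a \<and> vcomp C a (vid C (vcod C a)) = a) \<and>
   \<comment> \<open>C_1 is a category\<close>
   (\<forall>P\<in>Sq C. cdom C P \<in> Hor C \<and> ccod C P \<in> Hor C) \<and>
   (\<forall>f\<in>Hor C. cid C f \<in> Sq C \<and> cdom C (cid C f) = f \<and> ccod C (cid C f) = f) \<and>
   (\<forall>P\<in>Sq C. \<forall>Q\<in>Sq C. ccod C P = cdom C Q \<longrightarrow>
      cvcomp C P Q \<in> Sq C \<and> cdom C (cvcomp C P Q) = cdom C P \<and> ccod C (cvcomp C P Q) = ccod C Q) \<and>
   (\<forall>P\<in>Sq C. \<forall>Q\<in>Sq C. \<forall>R\<in>Sq C. ccod C P = cdom C Q \<longrightarrow> ccod C Q = cdom C R \<longrightarrow>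
      cvcomp C (cvcomp C P Q) R = cvcomp C P (cvcomp C Q R)) \<and>
   (\<forall>P\<in>Sq C. cvcomp C (cid C (cdom C P)) P = P \<and> cvcomp C P (cid C (ccod C P)) = P) \<and>
   \<comment> \<open>source and target functors C_1 -> C_0\<close>
   (\<forall>f\<in>Hor C. hdom C f \<in> Obj C \<and> hcod C f \<in> Obj C) \<and>
   (\<forall>P\<in>Sq C. src C P \<in> Ver C \<and> tgt C P \<in> Ver C \<and>
      vdom C (src C P) = hdom C (cdom C P) \<and> vcod C (src C P) = hdom C (ccod C P) \<and>
      vdom C (tgt C P) = hcod C (cdom C P) \<and> vcod C (tgt C P) = hcod C (ccod C P)) \<and>
   (\<forall>f\<in>Hor C. src C (cid C f) = vid C (hdom C f) \<and> tgt C (cid C f) = vid C (hcod C f)) \<and>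
   (\<forall>P\<in>Sq C. \<forall>Q\<in>Sq C. ccod C P = cdom C Q \<longrightarrow>
      src C (cvcomp C P Q) = vcomp C (src C P) (src C Q) \<and>
      tgt C (cvcomp C P Q) = vcomp C (tgt C P) (tgt C Q)) \<and>
   \<comment> \<open>horizontal identity functor i : C_0 -> C_1\<close>
   (\<forall>x\<in>Obj C. hid C x \<in> Hor C \<and> hdom C (hid C x) = x \<and> hcod C (hid C x) = x) \<and>
   (\<forall>a\<in>Ver C. chid C a \<in> Sq C \<and> cdom C (chid C a) = hid C (vdom C a) \<and>
      ccod C (chid C a) = hid C (vcod C a) \<and> src C (chid C a) = a \<and> tgt C (chid C a) = a) \<and>
   (\<forall>x\<in>Obj C. chid C (vid C x) = cid C (hid C x)) \<and>
   (\<forall>a\<in>Ver C. \<forall>b\<in>Ver C. vcod C a = vdom C b \<longrightarrow>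
      chid C (vcomp C a b) = cvcomp C (chid C a) (chid C b)) \<and>
   \<comment> \<open>horizontal composition functor * : C_1 x_{C_0} C_1 -> C_1\<close>
   (\<forall>f\<in>Hor C. \<forall>g\<in>Hor C. hcod C f = hdom C g \<longrightarrow>
      hcomp C f g \<in> Hor C \<and> hdom C (hcomp C f g) = hdom C f \<and> hcod C (hcomp C f g) = hcod C g) \<and>
   (\<forall>P\<in>Sq C. \<forall>Q\<in>Sq C. tgt C P = src C Q \<longrightarrow>
      chcomp C P Q \<in> Sq C \<and>
      cdom C (chcomp C P Q) = hcomp C (cdom C P) (cdom C Q) \<and>
      ccod C (chcomp C P Q) = hcomp C (ccod C P) (ccod C Q) \<and>
      src C (chcomp C P Q) = src C P \<and> tgt C (chcomp C P Q) = tgt C Q) \<and>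
   (\<forall>f\<in>Hor C. \<forall>g\<in>Hor C. hcod C f = hdom C g \<longrightarrow>
      cid C (hcomp C f g) = chcomp C (cid C f) (cid C g)) \<and>
   (\<forall>P\<in>Sq C. \<forall>P'\<in>Sq C. \<forall>Q\<in>Sq C. \<forall>Q'\<in>Sq C.
      ccod C P = cdom C P' \<longrightarrow> ccod C Q = cdom C Q' \<longrightarrow> tgt C P = src C Q \<longrightarrow> tgt C P' = src C Q' \<longrightarrow>
      chcomp C (cvcomp C P P') (cvcomp C Q Q') = cvcomp C (chcomp C P Q) (chcomp C P' Q')) \<and>
   \<comment> \<open>strict associativity and unitality of *\<close>
   (\<forall>f\<in>Hor C. \<forall>g\<in>Hor C. \<forall>h\<in>Hor C. hcod C f = hdom C g \<longrightarrow> hcod C g = hdom C h \<longrightarrow>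
      hcomp C (hcomp C f g) h = hcomp C f (hcomp C g h)) \<and>
   (\<forall>f\<in>Hor C. hcomp C (hid C (hdom C f)) f = f \<and> hcomp C f (hid C (hcod C f)) = f) \<and>
   (\<forall>P\<in>Sq C. \<forall>Q\<in>Sq C. \<forall>R\<in>Sq C. tgt C P = src C Q \<longrightarrow> tgt C Q = src C R \<longrightarrow>
      chcomp C (chcomp C P Q) R = chcomp C P (chcomp C Q R)) \<and>
   (\<forall>P\<in>Sq C. chcomp C (chid C (src C P)) P = P \<and> chcomp C P (chid C (tgt C P)) = P)"

definition globular :: "('o, 'v, 'h, 'c, 'z) dbl_scheme \<Rightarrow> 'c \<Rightarrow> bool" where
  "globular C P \<longleftrightarrow> P \<in> Sq C \<and> (\<exists>x\<in>Obj C. src C P = vid C x) \<and> (\<exists>y\<in>Obj C. tgt C P = vid C y)"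

text \<open>A set S of 2-morphisms together with all objects, vertical and horizontal morphisms
forms a sub-double category.\<close>
definition sub_double_cells :: "('o, 'v, 'h, 'c, 'z) dbl_scheme \<Rightarrow> 'c set \<Rightarrow> bool" where
  "sub_double_cells C S \<longleftrightarrow> S \<subseteq> Sq C \<and>
     (\<forall>f\<in>Hor C. cid C f \<in> S) \<and>
     (\<forall>P\<in>S. \<forall>Q\<in>S. ccod C P = cdom C Q \<longrightarrow> cvcomp C P Q \<in> S) \<and>
     (\<forall>a\<in>Ver C. chid C a \<in> S) \<and>
     (\<forall>P\<in>S. \<forall>Q\<in>S. tgt C P = src C Q \<longrightarrow> chcomp C P Q \<in> S)"

definition globularly_generated :: "('o, 'v, 'h, 'c, 'z) dbl_scheme \<Rightarrow> bool" where
  "globularly_generated C \<longleftrightarrow>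
     Sq C = \<Inter>{S. sub_double_cells C S \<and> {P. globular C P} \<subseteq> S}"

fun vcomp_list :: "('o, 'v, 'h, 'c, 'z) dbl_scheme \<Rightarrow> 'c list \<Rightarrow> 'c" where
  "vcomp_list C [] = undefined"
| "vcomp_list C [P] = P"
| "vcomp_list C (P # Q # Ps) = cvcomp C P (vcomp_list C (Q # Ps))"

fun hcomp_list :: "('o, 'v, 'h, 'c, 'z) dbl_scheme \<Rightarrow> 'c list \<Rightarrow> 'c" where
  "hcomp_list C [] = undefined"
| "hcomp_list C [P] = P"
| "hcomp_list C (P # Q # Ps) = chcomp C P (hcomp_list C (Q # Ps))"

definition vgen :: "('o, 'v, 'h, 'c, 'z) dbl_scheme \<Rightarrow> 'c set \<Rightarrow> 'c set" where
  "vgen C H =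
     {vcomp_list C Ps | Ps. Ps \<noteq> [] \<and> set Ps \<subseteq> H \<and> successively (\<lambda>P Q. ccod C P = cdom C Q) Ps}
     \<union> {cid C (cdom C P) | P. P \<in> H} \<union> {cid C (ccod C P) | P. P \<in> H}"

definition hcomps :: "('o, 'v, 'h, 'c, 'z) dbl_scheme \<Rightarrow> 'c set \<Rightarrow> 'c set" where
  "hcomps C V =
     {hcomp_list C Ps | Ps. Ps \<noteq> [] \<and> set Ps \<subseteq> V \<and> successively (\<lambda>P Q. tgt C P = src C Q) Ps}"

text \<open>The n-th horizontal category H^C_n (as its set of morphisms), for n \<ge> 1;
index 0 is unused (empty).\<close>
fun Hcat :: "('o, 'v, 'h, 'c, 'z) dbl_scheme \<Rightarrow> nat \<Rightarrow> 'c set" where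
  "Hcat C 0 = {}"
| "Hcat C (Suc 0) = {P. globular C P} \<union> {chid C a | a. a \<in> Ver C}"
| "Hcat C (Suc (Suc n)) = hcomps C (vgen C (Hcat C (Suc n)))"

definition tau_mor :: "('o, 'v, 'h, 'c, 'z) dbl_scheme \<Rightarrow> 'c set" where
  "tau_mor C = Sq C"

end

theory Submission
  imports Defs
begin

lemma vcl_sq:
  assumes S: "strict_double_category C"
  shows "Ps \<noteq> [] \<Longrightarrow> set Ps \<subseteq> Sq C \<Longrightarrow> successively (\<lambda>P Q. ccod C P = cdom C Q) Ps \<Longrightarrow>
     vcomp_list C Ps \<in> Sq C \<and> cdom C (vcomp_list C Ps) = cdom C (hd Ps)"
proof (induction Ps rule: induct_list012)
  case (3 P Q Ps)
  have ax: "\<forall>P\<in>Sq C. \<forall>Q\<in>Sq C. ccod C P = cdom C Q \<longrightarrow>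
      cvcomp C P Q \<in> Sq C \<and> cdom C (cvcomp C P Q) = cdom C P \<and> ccod C (cvcomp C P Q) = ccod C Q"
    using S unfolding strict_double_category_def apply (elim conjE) apply assumption done
  from 3 show ?case using ax by auto
qed auto

lemma hcl_sq:
  assumes S: "strict_double_category C"
  shows "Ps \<noteq> [] \<Longrightarrow> set Ps \<subseteq> Sq C \<Longrightarrow> successively (\<lambda>P Q. tgt C P = src C Q) Ps \<Longrightarrow>
     hcomp_list C Ps \<in> Sq C \<and> src C (hcomp_list C Ps) = src C (hd Ps)"
proof (induction Ps rule: induct_list012)
  case (3 P Q Ps)
  have ax: "\<forall>P\<in>Sq C. \<forall>Q\<in>Sq C. tgt C P = src C Q \<longrightarrow>
      chcomp C P Q \<in> Sq C \<and>
      cdom C (chcomp C P Q) = hcomp C (cdom C P) (cdom C Q) \<and>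
      ccod C (chcomp C P Q) = hcomp C (ccod C P) (ccod C Q) \<and>
      src C (chcomp C P Q) = src C P \<and> tgt C (chcomp C P Q) = tgt C Q"
    using S unfolding strict_double_category_def apply (elim conjE) apply assumption done
  from 3 show ?case using ax by auto
qed auto

lemma vgen_sq:
  assumes S: "strict_double_category C" and H: "H \<subseteq> Sq C"
  shows "vgen C H \<subseteq> Sq C"
proof -
  have a1: "\<forall>P\<in>Sq C. cdom C P \<in> Hor C \<and> ccod C P \<in> Hor C"
    using S unfolding strict_double_category_def apply (elim conjE) apply assumption done
  have a2: "\<forall>f\<in>Hor C. cid C f \<in> Sq C \<and> cdom C (cid C f) = f \<and> ccod C (cid C f) = f"
    using S unfolding strict_double_category_def apply (elim conjE) apply assumption done
  show ?thesis unfolding vgen_def using vcl_sq[OF S] H a1 a2 by blast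
qed

lemma hcomps_sq:
  assumes S: "strict_double_category C" and H: "H \<subseteq> Sq C"
  shows "hcomps C H \<subseteq> Sq C"
  unfolding hcomps_def using hcl_sq[OF S] H by blast

lemma Hcat_sq0: "strict_double_category C \<Longrightarrow> Hcat C n \<subseteq> Sq C"
proof (induction C n rule: Hcat.induct)
  case (2 C)
  have "\<forall>a\<in>Ver C. chid C a \<in> Sq C \<and> cdom C (chid C a) = hid C (vdom C a) \<and>
      ccod C (chid C a) = hid C (vcod C a) \<and> src C (chid C a) = a \<and> tgt C (chid C a) = a"
    using 2 unfolding strict_double_category_def apply (elim conjE) apply assumption done
  then show ?case by (auto simp: globular_def)
next
  case (3 C n)
  then show ?case using hcomps_sq vgen_sq by (metis Hcat.simps(3))
qed auto

lemma Hcat_sq: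
  assumes S: "strict_double_category C"
  shows "Hcat C n \<subseteq> Sq C"
  using Hcat_sq0[OF S] .

lemma vgen_I: "Ps \<noteq> [] \<Longrightarrow> set Ps \<subseteq> H \<Longrightarrow> successively (\<lambda>P Q. ccod C P = cdom C Q) Ps
   \<Longrightarrow> vcomp_list C Ps \<in> vgen C H"
  unfolding vgen_def by blast

lemma hcomps_I: "Ps \<noteq> [] \<Longrightarrow> set Ps \<subseteq> H \<Longrightarrow> successively (\<lambda>P Q. tgt C P = src C Q) Ps
   \<Longrightarrow> hcomp_list C Ps \<in> hcomps C H"
  unfolding hcomps_def by blast

lemma sub_vgen: "H \<subseteq> vgen C H"
proof
  fix P assume "P \<in> H"
  then have "vcomp_list C [P] \<in> vgen C H" by (intro vgen_I) auto
  then show "P \<in> vgen C H" by simp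
qed

lemma sub_hcomps: "H \<subseteq> hcomps C H"
proof
  fix P assume "P \<in> H"
  then have "hcomp_list C [P] \<in> hcomps C H" by (intro hcomps_I) auto
  then show "P \<in> hcomps C H" by simp
qed

lemma Hcat_step: "Hcat C (Suc k) \<subseteq> Hcat C (Suc (Suc k))"
  by (simp only: Hcat.simps) (rule subset_trans[OF sub_vgen sub_hcomps])

lemma Hcat_mono: assumes "1 \<le> m" shows "m \<le> n \<Longrightarrow> Hcat C m \<subseteq> Hcat C n"
proof (induction n rule: dec_induct)
  case (step n)
  then obtain k where "n = Suc k" using assms by (cases n) auto
  then show ?case using step.IH Hcat_step[of C k] by (rule_tac subset_trans) auto
qed auto

lemma inU: "1 \<le> m \<Longrightarrow> P \<in> Hcat C m \<Longrightarrow> P \<in> (\<Union>n\<in>{1..}. Hcat C n)"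
  by (rule UN_I[of m]) (simp_all del: Hcat.simps)

theorem corollary4p2:
  assumes "strict_double_category C"
    and "globularly_generated C"
  shows "tau_mor C = (\<Union>n\<in>{1..}. Hcat C n)"
proof
  show "(\<Union>n\<in>{1..}. Hcat C n) \<subseteq> tau_mor C"
    using Hcat_sq[OF assms(1)] unfolding tau_mor_def by blast
next
  let ?U = "\<Union>n\<in>{1..}. Hcat C n"
  have both: "\<exists>k. P \<in> Hcat C (Suc k) \<and> Q \<in> Hcat C (Suc k)" if "P \<in> ?U" "Q \<in> ?U" for P Q
  proof -
    from that(1) obtain m where m0: "m \<in> {1..}" "P \<in> Hcat C m" by (rule UN_E)
    from that(2) obtain n where n0: "n \<in> {1..}" "Q \<in> Hcat C n" by (rule UN_E)
    have m: "m \<ge> 1" "P \<in> Hcat C m" using m0 by auto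
    have n: "n \<ge> 1" "Q \<in> Hcat C n" using n0 by auto
    have "P \<in> Hcat C (max m n)" "Q \<in> Hcat C (max m n)"
      using Hcat_mono[of m "max m n" C] Hcat_mono[of n "max m n" C] m n by auto
    moreover obtain k where "max m n = Suc k" using m by (cases "max m n") auto
    ultimately show ?thesis by auto
  qed
  have sub: "sub_double_cells C ?U"
    unfolding sub_double_cells_def
  proof (intro conjI ballI impI)
    show "?U \<subseteq> Sq C" using Hcat_sq[OF assms(1)] by blast
  next
    fix f assume f: "f \<in> Hor C"
    have "\<forall>f\<in>Hor C. cid C f \<in> Sq C \<and> cdom C (cid C f) = f \<and> ccod C (cid C f) = f"
      using assms(1) unfolding strict_double_category_def apply (elim conjE) apply assumption done
    moreover have "\<forall>f\<in>Hor C. src C (cid C f) = vid C (hdom C f) \<and> tgt C (cid C f) = vid C (hcod C f)"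
      using assms(1) unfolding strict_double_category_def apply (elim conjE) apply assumption done
    moreover have "\<forall>f\<in>Hor C. hdom C f \<in> Obj C \<and> hcod C f \<in> Obj C"
      using assms(1) unfolding strict_double_category_def apply (elim conjE) apply assumption done
    ultimately have "globular C (cid C f)" using f unfolding globular_def by blast
    then have "cid C f \<in> Hcat C 1" by simp
    then show "cid C f \<in> ?U" by (rule inU[rotated]) simp
  next
    fix a assume "a \<in> Ver C"
    then have "chid C a \<in> Hcat C 1" by auto
    then show "chid C a \<in> ?U" by (rule inU[rotated]) simp
  next
    fix P Q assume PQ: "P \<in> ?U" "Q \<in> ?U" and c: "ccod C P = cdom C Q"
    obtain k where k: "P \<in> Hcat C (Suc k)" "Q \<in> Hcat C (Suc k)" using both[OF PQ] by blast
    have "vcomp_list C [P, Q] \<in> vgen C (Hcat C (Suc k))"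
      using k c by (intro vgen_I) (auto simp del: Hcat.simps)
    then have "cvcomp C P Q \<in> vgen C (Hcat C (Suc k))" by (simp only: vcomp_list.simps)
    then have "cvcomp C P Q \<in> hcomps C (vgen C (Hcat C (Suc k)))"
      using sub_hcomps[of "vgen C (Hcat C (Suc k))" C] by blast
    then have "cvcomp C P Q \<in> Hcat C (Suc (Suc k))" by (simp only: Hcat.simps)
    then show "cvcomp C P Q \<in> ?U" by (rule inU[rotated]) simp
  next
    fix P Q assume PQ: "P \<in> ?U" "Q \<in> ?U" and c: "tgt C P = src C Q"
    obtain k where k: "P \<in> Hcat C (Suc k)" "Q \<in> Hcat C (Suc k)" using both[OF PQ] by blast
    have k': "P \<in> vgen C (Hcat C (Suc k))" "Q \<in> vgen C (Hcat C (Suc k))"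
      using k sub_vgen[of "Hcat C (Suc k)" C] by blast+
    have "hcomp_list C [P, Q] \<in> hcomps C (vgen C (Hcat C (Suc k)))"
      using k' c by (intro hcomps_I) (auto simp del: Hcat.simps)
    then have "chcomp C P Q \<in> hcomps C (vgen C (Hcat C (Suc k)))" by (simp only: hcomp_list.simps)
    then have "chcomp C P Q \<in> Hcat C (Suc (Suc k))" by (simp only: Hcat.simps)
    then show "chcomp C P Q \<in> ?U" by (rule inU[rotated]) simp
  qed
  have "{P. globular C P} \<subseteq> ?U"
  proof
    fix P assume "P \<in> {P. globular C P}"
    then have "P \<in> Hcat C 1" by simp
    then show "P \<in> ?U" by (rule inU[rotated]) simp
  qed
  then have "?U \<in> {S. sub_double_cells C S \<and> {P. globular C P} \<subseteq> S}" using sub by simp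
  then have "\<Inter>{S. sub_double_cells C S \<and> {P. globular C P} \<subseteq> S} \<subseteq> ?U" by (rule Inter_lower)
  then have "Sq C \<subseteq> ?U" using assms(2) unfolding globularly_generated_def by simp
  then show "tau_mor C \<subseteq> ?U" unfolding tau_mor_def .
qed

end
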